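(* Let $(x,P)$ be a mechanism satisfying the incentive compatibility constraints, and let $v(\theta)=CPT(\theta,x(\theta),P_\theta)$. Define \[P^*_\theta(y)=\begin{cases}0 & \text{if } y\ge\frac{\mu^*}{\lambda p^*}\big(\theta w_+(x(\theta))-v(\theta)\big),\\ p^* & \text{if } y<\frac{\mu^*}{\lambda p^*}\big(\theta w_+(x(\theta))-v(\theta)\big).\end{cases}\] Then the mechanism $(x,P^* )$ is incentive compatible and yields expected profit at least as high as $(x,P)$.
   Context: $\lambda>0$; $w_+,w_-:[0,1]\to[0,1]$ strictly increasing, thrice differentiable, $w_\pm(0)=0$, $w_\pm(1)=1$, $w_\pm'(0),w_\pm'(1)>1$, $w_\pm'''>0$. $\mu^*=\max_{p\in(0,1]}p/w_-(p)$ and $p^*\in(0,1)$ is the unique point with $\mu^*w_-(p^* )=p^*$. The buyer's value $\theta\in[\underline\theta,\overline\theta]$ is private, with prior $F$ having positive density $f$. A (direct) mechanism $(x,P)$ specifies for each reported type $\theta$ a delivery probability $x(\theta)\in[0,1]$ and the tail $P_\theta(y)=P(T(\theta)>y)$ of a nonnegative random price $T(\theta)$. $CPT(\theta,x,P)=\theta w_+(x)-\lambda\int_0^\infty w_-(P(y))dy$. Incentive compatibility: $CPT(\theta,x(\theta),P_\theta)\ge CPT(\theta,x(\hat\theta),P_{\hat\theta})$ for all $\theta,\hat\theta$. Expected profit: $\int_{\underline\theta}^{\overline\theta}\int_0^\infty P_\theta(y)dy\,f(\theta)d\theta$. *)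

theory Defs
  imports "HOL-Probability.Probability"
begin

definition prob_weight :: "(real \<Rightarrow> real) \<Rightarrow> bool" where
  "prob_weight w \<longleftrightarrow>
     strict_mono_on {0..1} w \<and> w ` {0..1} \<subseteq> {0..1} \<and> w 0 = 0 \<and> w 1 = 1 \<and>
     (\<exists>w1 w2 w3. (\<forall>p\<in>{0..1}.
         (w has_real_derivative w1 p) (at p within {0..1}) \<and>
         (w1 has_real_derivative w2 p) (at p within {0..1}) \<and>
         (w2 has_real_derivative w3 p) (at p within {0..1}) \<and> w3 p > 0)
       \<and> w1 0 > 1 \<and> w1 1 > 1)"

definition mu_star :: "(real \<Rightarrow> real) \<Rightarrow> real" where
  "mu_star w = (SUP p\<in>{0<..1}. p / w p)"

definition p_star :: "(real \<Rightarrow> real) \<Rightarrow> real" where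
  "p_star w = (THE p. p \<in> {0<..<1} \<and> mu_star w * w p = p)"

definition is_price_tail :: "(real \<Rightarrow> real) \<Rightarrow> bool" where
  "is_price_tail P \<longleftrightarrow>
     (\<exists>M :: real measure. prob_space M \<and> sets M = sets borel \<and> (AE t in M. 0 \<le> t) \<and>
        (\<forall>y\<ge>0. P y = measure M {t. y < t}))"

definition CPT :: "real \<Rightarrow> (real \<Rightarrow> real) \<Rightarrow> (real \<Rightarrow> real) \<Rightarrow> real \<Rightarrow> real \<Rightarrow> (real \<Rightarrow> real) \<Rightarrow> real" where
  "CPT lam wp wm \<theta> q P = \<theta> * wp q - lam * (LINT y:{0..}|lborel. wm (P y))"

definition mechanism :: "real \<Rightarrow> real \<Rightarrow> (real \<Rightarrow> real) \<Rightarrow> (real \<Rightarrow> real \<Rightarrow> real) \<Rightarrow> bool" where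
  "mechanism thl thh x P \<longleftrightarrow>
     (\<forall>\<theta>\<in>{thl..thh}. x \<theta> \<in> {0..1} \<and> is_price_tail (P \<theta>) \<and>
        set_integrable lborel {0..} (P \<theta>))"

definition incentive_compatible ::
  "real \<Rightarrow> (real \<Rightarrow> real) \<Rightarrow> (real \<Rightarrow> real) \<Rightarrow> real \<Rightarrow> real \<Rightarrow> (real \<Rightarrow> real) \<Rightarrow> (real \<Rightarrow> real \<Rightarrow> real) \<Rightarrow> bool" where
  "incentive_compatible lam wp wm thl thh x P \<longleftrightarrow>
     (\<forall>\<theta>\<in>{thl..thh}. \<forall>\<theta>'\<in>{thl..thh}.
        CPT lam wp wm \<theta> (x \<theta>') (P \<theta>') \<le> CPT lam wp wm \<theta> (x \<theta>) (P \<theta>))"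

definition expected_profit :: "real \<Rightarrow> real \<Rightarrow> (real \<Rightarrow> real) \<Rightarrow> (real \<Rightarrow> real \<Rightarrow> real) \<Rightarrow> ennreal" where
  "expected_profit thl thh f P =
     (\<integral>\<^sup>+ \<theta>. indicator {thl..thh} \<theta> * ennreal ((LINT y:{0..}|lborel. P \<theta> y) * f \<theta>) \<partial>lborel)"

end

theory Submission
  imports Defs
begin


lemma deriv_int:
  assumes "\<forall>p\<in>{0..1}. (f has_real_derivative f' p) (at p within {0..1})" "0<p" "p<(1::real)"
  shows "(f has_real_derivative f' p) (at p)"
proof -
  have "at p within {0..1} = at p" by (rule at_within_Icc_at) (use assms in auto)
  moreover have "(f has_real_derivative f' p) (at p within {0..1})" using assms by auto
  ultimately show ?thesis by simp
qed

lemma cont01: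
  assumes "\<forall>p\<in>{0..1::real}. (f has_real_derivative f' p) (at p within {0..1})"
  shows "continuous_on {0..1} f"
  using assms DERIV_continuous continuous_on_eq_continuous_within by blast

lemma rolle01:
  assumes d: "\<forall>p\<in>{0..1::real}. (f has_real_derivative f' p) (at p within {0..1})"
    and "0 \<le> a" "a < b" "b \<le> 1" "f a = f b"
  shows "\<exists>z. a<z \<and> z<b \<and> f' z = 0"
proof -
  have c: "continuous_on {a..b} f"
    by (rule continuous_on_subset[OF cont01[OF d]]) (use assms in auto)
  have dd: "DERIV f x :> f' x" if "a < x" "x < b" for x
    by (rule deriv_int[OF d]) (use assms that in linarith)+
  have "\<And>x. a < x \<Longrightarrow> x < b \<Longrightarrow> f differentiable (at x)"
    using dd real_differentiable_def by blast
  from Rolle[OF \<open>a<b\<close> \<open>f a = f b\<close> c this] obtain z where z: "a<z" "z<b" "DERIV f z :> 0"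
    by blast
  have "DERIV f z :> f' z" using dd z by blast
  with z show ?thesis using DERIV_unique by blast
qed

lemma no_two:
  fixes w w1 w2 w3 :: "real \<Rightarrow> real" and \<mu> :: real
  assumes D1: "\<forall>p\<in>{0..1}. (w has_real_derivative w1 p) (at p within {0..1})"
    and D2: "\<forall>p\<in>{0..1}. (w1 has_real_derivative w2 p) (at p within {0..1})"
    and D3: "\<forall>p\<in>{0..1}. (w2 has_real_derivative w3 p) (at p within {0..1})"
    and pos3: "\<forall>p\<in>{0..1}. w3 p > 0"
    and mu: "\<mu> > 0"
    and nonneg: "\<forall>p\<in>{0..1}. p \<le> \<mu> * w p"
    and w0: "w 0 = 0"
    and p12: "0 < p1" "p1 < p2" "p2 < 1"
    and z1: "\<mu> * w p1 = p1" and z2: "\<mu> * w p2 = p2"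
  shows False
proof -
  define g where "g = (\<lambda>p. \<mu> * w p - p)"
  have G: "\<forall>p\<in>{0..1}. (g has_real_derivative (\<mu> * w1 p - 1)) (at p within {0..1})"
    unfolding g_def using D1 by (auto intro!: derivative_eq_intros)
  obtain a where a: "0 < a" "a < p1" "\<mu> * w1 a - 1 = 0"
    using rolle01[OF G, of 0 p1] p12 z1 w0 by (auto simp: g_def)
  obtain b where b: "p1 < b" "b < p2" "\<mu> * w1 b - 1 = 0"
    using rolle01[OF G, of p1 p2] p12 z1 z2 by (auto simp: g_def)
  have der: "DERIV g p1 :> (\<mu> * w1 p1 - 1)" using deriv_int[OF G] p12 by auto
  have mn: "\<forall>y. \<bar>p1 - y\<bar> < min p1 (1 - p1) \<longrightarrow> g p1 \<le> g y"
  proof (intro allI impI)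
    fix y assume "\<bar>p1 - y\<bar> < min p1 (1 - p1)"
    then have "y \<in> {0..1}" by auto
    then have "y \<le> \<mu> * w y" using nonneg by auto
    then show "g p1 \<le> g y" using z1 unfolding g_def by auto
  qed
  have "\<mu> * w1 p1 - 1 = 0"
    by (rule DERIV_local_min[OF der _ mn]) (use p12 in auto)
  then have "\<mu> * w1 a = \<mu> * w1 p1" "\<mu> * w1 p1 = \<mu> * w1 b" using a b by auto
  then have e1: "w1 a = w1 p1" "w1 p1 = w1 b" using mu by auto
  obtain c where c: "a < c" "c < p1" "w2 c = 0"
  proof -
    have "\<exists>z. a<z \<and> z<p1 \<and> w2 z = 0" by (rule rolle01[OF D2]) (use a e1 p12 in linarith)+
    then show ?thesis using that by blast
  qed
  obtain d where d: "p1 < d" "d < b" "w2 d = 0"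
  proof -
    have "\<exists>z. p1<z \<and> z<b \<and> w2 z = 0" by (rule rolle01[OF D2]) (use b e1 p12 in linarith)+
    then show ?thesis using that by blast
  qed
  obtain e where e: "c < e" "e < d" "w3 e = 0"
  proof -
    have "\<exists>z. c<z \<and> z<d \<and> w3 z = 0" by (rule rolle01[OF D3]) (use a b c d p12 in linarith)+
    then show ?thesis using that by blast
  qed
  have "0 \<le> e" "e \<le> 1" using e a c d b p12 by linarith+
  then have "e \<in> {0..1}" by simp
  then have "w3 e > 0" using pos3 by blast
  with e show False by simp
qed

lemma weight_facts:
  assumes "prob_weight w"
  shows "0 < p_star w \<and> p_star w < 1 \<and> mu_star w * w (p_star w) = p_star w \<and> 1 < mu_star w
     \<and> (\<forall>p\<in>{0..1}. p \<le> mu_star w * w p)"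
proof -
  from assms obtain w1 w2 w3 where sm: "strict_mono_on {0..1} w" and w0: "w 0 = 0" and w1': "w 1 = 1"
    and D: "\<forall>p\<in>{0..1}. (w has_real_derivative w1 p) (at p within {0..1}) \<and>
         (w1 has_real_derivative w2 p) (at p within {0..1}) \<and>
         (w2 has_real_derivative w3 p) (at p within {0..1}) \<and> w3 p > 0"
    and a0: "w1 0 > 1" and a1: "w1 1 > 1"
    unfolding prob_weight_def by blast
  have D1: "\<forall>p\<in>{0..1}. (w has_real_derivative w1 p) (at p within {0..1})" using D by blast
  have D2: "\<forall>p\<in>{0..1}. (w1 has_real_derivative w2 p) (at p within {0..1})" using D by blast
  have D3: "\<forall>p\<in>{0..1}. (w2 has_real_derivative w3 p) (at p within {0..1})" using D by blast
  have pos3: "\<forall>p\<in>{0..1}. w3 p > 0" using D by blast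
  have wpos: "0 < w p" if "0 < p" "p \<le> 1" for p
    using sm[unfolded strict_mono_on_def, rule_format, of 0 p] that w0 by auto
  have contw: "continuous_on {0..1} w" by (rule cont01[OF D1])
  define h where "h = (\<lambda>p. p / w p)"
  have "((\<lambda>y. (w y - w 0)/(y - 0)) \<longlongrightarrow> w1 0) (at 0 within {0..1})"
    using has_field_derivative_iff[THEN iffD1, OF D1[rule_format, of 0]] by simp
  then have "\<forall>\<^sub>F y in at 0 within {0..1}. (w y - w 0)/(y-0) > 1" by (rule order_tendstoD(1)) (rule a0)
  then obtain d where d: "d>0" "\<forall>y\<in>{0..1}. y \<noteq> 0 \<and> dist y 0 < d \<longrightarrow> (w y - w 0)/(y-0) > 1"
    unfolding eventually_at by (elim exE conjE) blast
  define e where "e = min (d/2) 1"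
  have e: "0<e" "e\<le>1" using d by (auto simp: e_def)
  have hlt: "h p < 1" if "0<p" "p<e" for p
  proof -
    have "p \<in> {0..1}" "p \<noteq> 0" "dist p 0 < d" using that e d(1) unfolding e_def by (auto simp: dist_real_def)
    then have "(w p - w 0)/(p-0) > 1" using d(2) by blast
    then have "1 < w p / p" using w0 by simp
    then have "w p > p" using that(1) less_divide_eq_1_pos by blast
    moreover have "0 < w p" using wpos[of p] that e by auto
    ultimately show ?thesis unfolding h_def using divide_less_eq_1_pos by blast
  qed
  have "((\<lambda>y. (w y - w 1)/(y - 1)) \<longlongrightarrow> w1 1) (at 1 within {0..1})"
    using has_field_derivative_iff[THEN iffD1, OF D1[rule_format, of 1]] by simp
  then have "\<forall>\<^sub>F y in at 1 within {0..1}. (w y - w 1)/(y-1) > 1" by (rule order_tendstoD(1)) (rule a1)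
  then obtain d' where d': "d'>0" "\<forall>y\<in>{0..1}. y \<noteq> 1 \<and> dist y 1 < d' \<longrightarrow> (w y - w 1)/(y-1) > 1"
    unfolding eventually_at by (elim exE conjE) blast
  define q where "q = max (1/2) (1 - d'/2)"
  have q: "0 < q" "q < 1" using d' by (auto simp: q_def)
  have qq: "q \<in> {0..1}" "q \<noteq> 1" "dist q 1 < d'" using q d' by (auto simp: q_def dist_real_def)
  have "(w q - w 1)/(q-1) > 1" using d'(2) qq by blast
  then have "1 < (w q - 1)/(q-1)" using w1' by simp
  then have "w q - 1 < q - 1" using q less_divide_eq_1_neg[of "q-1" "w q - 1"] by auto
  then have "w q < q" by simp
  moreover have "0 < w q" using wpos[of q] q by auto
  ultimately have hq: "h q > 1" unfolding h_def using less_divide_eq_1_pos by blast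
  have nz: "\<forall>p\<in>{e..1}. w p \<noteq> 0"
  proof
    fix p assume "p \<in> {e..1}"
    then have "0 < p" "p \<le> 1" using e by auto
    then show "w p \<noteq> 0" using wpos by force
  qed
  have "continuous_on {e..1} h"
    unfolding h_def
    by (intro continuous_on_divide continuous_on_id continuous_on_subset[OF contw] nz) (use e in auto)
  then obtain p0 where p0: "p0 \<in> {e..1}" "\<forall>y\<in>{e..1}. h y \<le> h p0"
    using continuous_attains_sup[of "{e..1}" h] e by auto
  have h1: "h 1 = 1" using w1' by (simp add: h_def)
  have hp0ge: "1 \<le> h p0" using p0(2)[rule_format, of 1] h1 e by auto
  have hall: "\<forall>p\<in>{0<..1}. h p \<le> h p0"
  proof
    fix p :: real assume p: "p \<in> {0<..1}"
    show "h p \<le> h p0"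
    proof (cases "p < e")
      case True then show ?thesis using hlt[of p] p hp0ge by auto
    next
      case False then show ?thesis using p0 p by auto
    qed
  qed
  have "q \<in> {0<..1}" using q by auto
  then have "h q \<le> h p0" using hall by blast
  then have hp0: "h p0 > 1" using hq by linarith
  have p0a: "0 < p0" "p0 \<le> 1" using p0(1) e by auto
  have "p0 \<noteq> 1" using hp0 h1 by auto
  then have p0': "0 < p0" "p0 < 1" using p0a by auto
  have mu: "mu_star w = h p0"
  proof -
    have "mu_star w = Sup (h ` {0<..1})" by (simp add: mu_star_def h_def)
    also have "\<dots> = h p0"
    proof (rule cSup_eq_maximum)
      show "h p0 \<in> h ` {0<..1}" using p0' by auto
      show "\<And>x. x \<in> h ` {0<..1} \<Longrightarrow> x \<le> h p0" using hall by blast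
    qed
    finally show ?thesis .
  qed
  have "w p0 \<noteq> 0" using wpos[of p0] p0' by auto
  then have mup0: "mu_star w * w p0 = p0" unfolding mu h_def by simp
  have mu1: "1 < mu_star w" using mu hp0 by simp
  have bound: "\<forall>p\<in>{0..1}. p \<le> mu_star w * w p"
  proof
    fix p :: real assume p: "p \<in> {0..1}"
    show "p \<le> mu_star w * w p"
    proof (cases "p = 0")
      case True then show ?thesis using w0 by simp
    next
      case False
      then have "p \<in> {0<..1}" using p by auto
      then have "h p \<le> mu_star w" using hall mu by auto
      moreover have "0 < w p" using wpos[of p] p False by auto
      ultimately show ?thesis unfolding h_def using pos_divide_le_eq by blast
    qed
  qed
  have uniq: "p1 = p0" if "p1 \<in> {0<..<1}" "mu_star w * w p1 = p1" for p1
  proof (rule ccontr)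
    assume ne: "p1 \<noteq> p0"
    have mupos: "0 < mu_star w" using mu1 by simp
    have p1r: "0 < p1" "p1 < 1" using that(1) by auto
    show False
    proof (cases "p1 < p0")
      case True
      show False using no_two[OF D1 D2 D3 pos3 mupos bound w0 p1r(1) True p0'(2) that(2) mup0] .
    next
      case False
      then have "p0 < p1" using ne by auto
      show False using no_two[OF D1 D2 D3 pos3 mupos bound w0 p0'(1) \<open>p0 < p1\<close> p1r(2) mup0 that(2)] .
    qed
  qed
  have ps: "p_star w = p0" unfolding p_star_def
  proof (rule the_equality)
    show "p0 \<in> {0<..<1} \<and> mu_star w * w p0 = p0" using p0' mup0 by auto
    show "\<And>p. p \<in> {0<..<1} \<and> mu_star w * w p = p \<Longrightarrow> p = p0" using uniq by blast
  qed
  show ?thesis using ps p0' mup0 mu1 bound by auto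
qed



lemma step_int:
  fixes b c :: real
  assumes "0 \<le> b"
  shows "set_integrable lborel {0..} (\<lambda>y. if b \<le> y then 0 else c) \<and>
         (LINT y:{0..}|lborel. (if b \<le> y then 0 else c)) = c * b"
proof -
  have eq: "(\<lambda>y. indicator {0..} y *\<^sub>R (if b \<le> y then 0 else c)) = (\<lambda>y. c * indicator {0..<b} y)"
    by (auto simp: indicator_def fun_eq_iff)
  have i: "integrable lborel (indicat_real {0..<b})"
    by (rule integrable_real_indicator) (use assms in auto)
  show ?thesis
    unfolding set_integrable_def set_lebesgue_integral_def eq
    using i assms by (simp add: integral_indicator)
qed

lemma tail_step:
  fixes b c :: real
  assumes "0 \<le> b" "0 \<le> c" "c \<le> 1"
  shows "is_price_tail (\<lambda>y. if b \<le> y then 0 else c)"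
proof -
  define M where "M = distr (measure_pmf (bernoulli_pmf c)) borel (\<lambda>z. if z then b else 0)"
  have meas: "(\<lambda>z. if z then b else 0) \<in> measurable (measure_pmf (bernoulli_pmf c)) borel"
    by simp
  have ps: "prob_space M" unfolding M_def
    by (rule prob_space.prob_space_distr[OF _ meas]) (rule prob_space_measure_pmf)
  have sets: "sets M = sets borel" by (simp add: M_def)
  have ae: "AE t in M. 0 \<le> t" unfolding M_def
    by (subst AE_distr_iff[OF meas]) (use assms in auto)
  have "measure M {t. y < t} = (if b \<le> y then 0 else c)" if "0 \<le> y" for y
  proof -
    have "measure M {t. y < t} = measure (measure_pmf (bernoulli_pmf c)) ((\<lambda>z. if z then b else 0) -` {t. y < t})"
      unfolding M_def by (subst measure_distr[OF meas]) auto
    also have "(\<lambda>z. if z then b else 0) -` {t. y < t} = (if b \<le> y then {} else {True})"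
      using that by (auto split: if_splits)
    also have "measure (measure_pmf (bernoulli_pmf c)) \<dots> = (if b \<le> y then 0 else c)"
      using assms by (simp add: measure_pmf_single)
    finally show ?thesis .
  qed
  then show ?thesis unfolding is_price_tail_def using ps sets ae by metis
qed

lemma w_lin:
  assumes "prob_weight w"
  shows "\<exists>K. \<forall>t\<in>{0..1}. 0 \<le> w t \<and> w t \<le> K * t"
proof -
  from assms obtain w1 w2 where im: "w ` {0..1} \<subseteq> {0..1}" and w0: "w 0 = 0"
    and D1: "\<forall>p\<in>{0..1}. (w has_real_derivative w1 p) (at p within {0..1})"
    and D2: "\<forall>p\<in>{0..1}. (w1 has_real_derivative w2 p) (at p within {0..1})"
    unfolding prob_weight_def by blast
  obtain m where m: "m \<in> {0..1}" "\<forall>y\<in>{0..1}. w1 y \<le> w1 m"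
    using continuous_attains_sup[of "{0..1::real}" w1] cont01[OF D2] by auto
  have "0 \<le> w t \<and> w t \<le> w1 m * t" if t: "t \<in> {0..1}" for t
  proof (cases "t = 0")
    case True then show ?thesis using w0 by simp
  next
    case False
    then have t0: "0 < t" using t by auto
    have c: "continuous_on {0..t} w"
      by (rule continuous_on_subset[OF cont01[OF D1]]) (use t in auto)
    have "\<And>x. 0 < x \<Longrightarrow> x < t \<Longrightarrow> w differentiable (at x)"
      using deriv_int[OF D1] t real_differentiable_def by force
    from MVT[OF t0 c this] obtain l z where z: "0 < z" "z < t" "DERIV w z :> l" "w t - w 0 = (t - 0) * l"
      by blast
    have "DERIV w z :> w1 z" using deriv_int[OF D1] z t by auto
    then have "l = w1 z" using z DERIV_unique by blast
    then have "w t = t * w1 z" using z w0 by simp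
    also have "\<dots> \<le> w1 m * t" using m z t t0 by (simp add: mult.commute)
    finally have "w t \<le> w1 m * t" .
    moreover have "w t \<in> {0..1}" using im t by blast
    ultimately show ?thesis by auto
  qed
  then show ?thesis by blast
qed

lemma w_int:
  fixes Q :: "real \<Rightarrow> real"
  assumes w: "prob_weight w" and Q: "set_integrable lborel {0..} Q" and Qr: "\<forall>y\<ge>0. Q y \<in> {0..1}"
  shows "set_integrable lborel {0..} (\<lambda>y. w (Q y))"
proof -
  from w obtain w1 where w0: "w 0 = 0"
    and D1: "\<forall>p\<in>{0..1}. (w has_real_derivative w1 p) (at p within {0..1})"
    unfolding prob_weight_def by blast
  obtain K where K: "\<forall>t\<in>{0..1}. 0 \<le> w t \<and> w t \<le> K * t" using w_lin[OF w] by blast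
  define g where "g = (\<lambda>y. indicator {0..} y *\<^sub>R Q y)"
  have gi: "integrable lborel g" using Q unfolding set_integrable_def g_def .
  have gm: "g \<in> borel_measurable lborel" using gi by auto
  have gr: "g y \<in> {0..1}" for y using Qr by (auto simp: g_def indicator_def)
  define wc where "wc = (\<lambda>t. w (max 0 (min 1 t)))"
  have "continuous_on UNIV wc" unfolding wc_def
    by (rule continuous_on_compose2[OF cont01[OF D1]]) (auto intro!: continuous_intros)
  then have wcm: "wc \<in> borel_measurable borel" by (rule borel_measurable_continuous_onI)
  have eq: "(\<lambda>y. indicator {0..} y *\<^sub>R w (Q y)) = (\<lambda>y. wc (g y))"
  proof
    fix y :: real
    show "indicator {0..} y *\<^sub>R w (Q y) = wc (g y)"
      using Qr w0 by (cases "0 \<le> y") (auto simp: wc_def g_def indicator_def)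
  qed
  have i1: "integrable lborel (\<lambda>y. K * g y)" using gi by simp
  have m1: "(\<lambda>y. wc (g y)) \<in> borel_measurable lborel" using wcm gm by measurable
  have ae: "AE y in lborel. norm (wc (g y)) \<le> norm (K * g y)"
  proof (rule AE_I2)
    fix y
    have "wc (g y) = w (g y)" using gr[of y] by (simp add: wc_def)
    moreover have "0 \<le> w (g y)" "w (g y) \<le> K * g y" using K gr[of y] by auto
    ultimately show "norm (wc (g y)) \<le> norm (K * g y)" by simp
  qed
  have "integrable lborel (\<lambda>y. wc (g y))" by (rule Bochner_Integration.integrable_bound[OF i1 m1 ae])
  then show ?thesis unfolding set_integrable_def eq .
qed



theorem lemma6:
  fixes lam thl thh :: real and wp wm f x :: "real \<Rightarrow> real"
    and P :: "real \<Rightarrow> real \<Rightarrow> real"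
  assumes lam: "lam > 0"
    and wp: "prob_weight wp" and wm: "prob_weight wm"
    and thl_thh: "thl < thh"
    and f_pos: "\<forall>\<theta>\<in>{thl..thh}. f \<theta> > 0"
    and f_int: "set_integrable lborel {thl..thh} f"
    and f_one: "(LINT \<theta>:{thl..thh}|lborel. f \<theta>) = 1"
    and mech: "mechanism thl thh x P"
    and IC: "incentive_compatible lam wp wm thl thh x P"
  defines "Pstar \<equiv> (\<lambda>\<theta> y. if y \<ge> mu_star wm / (lam * p_star wm) * (\<theta> * wp (x \<theta>) - CPT lam wp wm \<theta> (x \<theta>) (P \<theta>))
                        then 0 else p_star wm)"
  shows "mechanism thl thh x Pstar \<and> incentive_compatible lam wp wm thl thh x Pstar \<and>
         expected_profit thl thh f Pstar \<ge> expected_profit thl thh f P"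
proof -
  define ps where "ps = p_star wm"
  define mu where "mu = mu_star wm"
  have ps0: "0 < ps" and ps1: "ps < 1" and mw: "mu * wm ps = ps" and mu1: "1 < mu"
    and bnd: "\<forall>p\<in>{0..1}. p \<le> mu * wm p"
    using weight_facts[OF wm] unfolding ps_def mu_def by auto
  have wm0: "wm 0 = 0" using wm unfolding prob_weight_def by blast
  obtain K where K: "\<forall>t\<in>{0..1}. 0 \<le> wm t \<and> wm t \<le> K * t" using w_lin[OF wm] by blast
  define L where "L \<theta> = (LINT y:{0..}|lborel. wm (P \<theta> y))" for \<theta>
  define B where "B \<theta> = mu / (lam * ps) * (\<theta> * wp (x \<theta>) - CPT lam wp wm \<theta> (x \<theta>) (P \<theta>))" for \<theta>
  have BL: "B \<theta> = mu / ps * L \<theta>" for \<theta>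
  proof -
    have "\<theta> * wp (x \<theta>) - CPT lam wp wm \<theta> (x \<theta>) (P \<theta>) = lam * L \<theta>"
      unfolding CPT_def L_def by simp
    then show ?thesis unfolding B_def using lam ps0 by (simp add: field_simps)
  qed
  have PstE: "Pstar \<theta> = (\<lambda>y. if B \<theta> \<le> y then 0 else ps)" for \<theta>
    unfolding Pstar_def B_def ps_def mu_def by simp
  have key: "set_integrable lborel {0..} (P \<theta>) \<and> is_price_tail (Pstar \<theta>) \<and>
      set_integrable lborel {0..} (Pstar \<theta>) \<and>
      (\<forall>t q. CPT lam wp wm t q (Pstar \<theta>) = CPT lam wp wm t q (P \<theta>)) \<and>
      (LINT y:{0..}|lborel. P \<theta> y) \<le> (LINT y:{0..}|lborel. Pstar \<theta> y)"
    if th: "\<theta> \<in> {thl..thh}" for \<theta>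
  proof -
    have Pint: "set_integrable lborel {0..} (P \<theta>)" and tl: "is_price_tail (P \<theta>)"
      using mech th unfolding mechanism_def by auto
    then obtain M where M: "prob_space M" "\<forall>y\<ge>0. P \<theta> y = measure M {t. y < t}"
      unfolding is_price_tail_def by blast
    have tail: "\<forall>y\<ge>0. P \<theta> y \<in> {0..1}"
    proof (intro allI impI)
      fix y :: real assume "0 \<le> y"
      then have "P \<theta> y = measure M {t. y < t}" using M by auto
      moreover have "measure M {t. y < t} \<le> 1" using prob_space.prob_le_1[OF M(1)] by blast
      ultimately show "P \<theta> y \<in> {0..1}" by auto
    qed
    have wint: "set_integrable lborel {0..} (\<lambda>y. wm (P \<theta> y))" by (rule w_int[OF wm Pint tail])
    have Lnn: "0 \<le> L \<theta>" unfolding L_def set_lebesgue_integral_def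
    proof (rule Bochner_Integration.integral_nonneg)
      fix y :: real
      show "0 \<le> indicator {0..} y *\<^sub>R wm (P \<theta> y)"
      proof (cases "0 \<le> y")
        case True
        then have "P \<theta> y \<in> {0..1}" using tail by auto
        then have "0 \<le> wm (P \<theta> y)" using K by auto
        then show ?thesis by simp
      next
        case False then show ?thesis by simp
      qed
    qed
    have B0: "0 \<le> B \<theta>" using BL[of \<theta>] Lnn mu1 ps0 by simp
    have si: "set_integrable lborel {0..} (Pstar \<theta>)"
      and sI: "(LINT y:{0..}|lborel. Pstar \<theta> y) = ps * B \<theta>"
      using step_int[OF B0, of ps] unfolding PstE by auto
    have wPs: "(\<lambda>y. wm (Pstar \<theta> y)) = (\<lambda>y. if B \<theta> \<le> y then 0 else wm ps)"
      by (auto simp: PstE wm0 fun_eq_iff)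
    have LPs: "(LINT y:{0..}|lborel. wm (Pstar \<theta> y)) = L \<theta>"
    proof -
      have "(LINT y:{0..}|lborel. wm (Pstar \<theta> y)) = wm ps * B \<theta>"
        unfolding wPs using step_int[OF B0, of "wm ps"] by auto
      also have "\<dots> = (mu * wm ps) / ps * L \<theta>" using BL[of \<theta>] by simp
      also have "\<dots> = L \<theta>" using mw ps0 by simp
      finally show ?thesis .
    qed
    have cpteq: "\<forall>t q. CPT lam wp wm t q (Pstar \<theta>) = CPT lam wp wm t q (P \<theta>)"
      unfolding CPT_def using LPs unfolding L_def by simp
    have int2: "set_integrable lborel {0..} (\<lambda>y. mu * wm (P \<theta> y))"
    proof -
      have "integrable lborel (\<lambda>y. mu * (indicator {0..} y *\<^sub>R wm (P \<theta> y)))"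
        using wint unfolding set_integrable_def by (rule integrable_mult_right)
      moreover have "(\<lambda>y. mu * (indicator {0..} y *\<^sub>R wm (P \<theta> y))) = (\<lambda>y. indicator {0..} y *\<^sub>R (mu * wm (P \<theta> y)))"
        by (simp add: fun_eq_iff)
      ultimately show ?thesis unfolding set_integrable_def by metis
    qed
    have "(LINT y:{0..}|lborel. P \<theta> y) \<le> (LINT y:{0..}|lborel. mu * wm (P \<theta> y))"
      by (rule set_integral_mono[OF Pint int2]) (use tail bnd in auto)
    also have "\<dots> = mu * L \<theta>" unfolding L_def by (rule set_integral_mult_right)
    also have "\<dots> = ps * B \<theta>" using BL[of \<theta>] ps0 by simp
    finally have "(LINT y:{0..}|lborel. P \<theta> y) \<le> (LINT y:{0..}|lborel. Pstar \<theta> y)"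
      using sI by simp
    moreover have "is_price_tail (Pstar \<theta>)"
      unfolding PstE by (rule tail_step[OF B0]) (use ps0 ps1 in auto)
    ultimately show ?thesis using Pint si cpteq by blast
  qed
  have m: "mechanism thl thh x Pstar"
    using mech key unfolding mechanism_def by blast
  have ic: "incentive_compatible lam wp wm thl thh x Pstar"
    using IC key unfolding incentive_compatible_def by simp
  have pr: "expected_profit thl thh f P \<le> expected_profit thl thh f Pstar"
    unfolding expected_profit_def
  proof (rule nn_integral_mono)
    fix \<theta> :: real
    show "indicator {thl..thh} \<theta> * ennreal ((LINT y:{0..}|lborel. P \<theta> y) * f \<theta>)
       \<le> indicator {thl..thh} \<theta> * ennreal ((LINT y:{0..}|lborel. Pstar \<theta> y) * f \<theta>)"
    proof (cases "\<theta> \<in> {thl..thh}")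
      case True
      have "(LINT y:{0..}|lborel. P \<theta> y) * f \<theta> \<le> (LINT y:{0..}|lborel. Pstar \<theta> y) * f \<theta>"
      proof (rule mult_right_mono)
        show "(LINT y:{0..}|lborel. P \<theta> y) \<le> (LINT y:{0..}|lborel. Pstar \<theta> y)" using key[OF True] by blast
        show "0 \<le> f \<theta>" using f_pos True by (simp add: less_imp_le)
      qed
      then show ?thesis using True by (auto intro!: ennreal_leI)
    next
      case False then show ?thesis by simp
    qed
  qed
  show ?thesis using m ic pr by simp
qed

end
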